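(* Let $p(n)$ be a function. For each function $L:\{0,1\}^n\to\{0,1\}$ let $|\psi_L\rangle$ be a $p(n)$-qubit state. Let $\mathcal{Q}$ be any (computationally unbounded) quantum algorithm that, on input $x\in\{0,1\}^n$, performs a measurement depending only on $x$ (and not on $L$) on $|\psi_L\rangle$ and outputs a bit $\mathcal{Q}(x,|\psi_L\rangle)$. Then $$\Pr_{x,L}[\mathcal{Q}(x,|\psi_L\rangle)=L(x)]\le\frac12+O\Big(\big(p(n)/2^n\big)^{1/3}\Big),$$ where $L$ is a uniformly random function and $x$ is uniform in $\{0,1\}^n$. *)

theory Defs
  imports "HOL-Library.FuncSet" "Jordan_Normal_Form.Matrix" "Jordan_Normal_Form.Conjugate"
begin

definition qdim :: "nat \<Rightarrow> nat" where "qdim m = 2 ^ m"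

definition pure_state :: "nat \<Rightarrow> complex vec \<Rightarrow> bool" where
  "pure_state m v \<longleftrightarrow> v \<in> carrier_vec (qdim m) \<and> cscalar_prod v v = 1"

definition hermitian_mat :: "complex mat \<Rightarrow> bool" where
  "hermitian_mat A \<longleftrightarrow> dim_row A = dim_col A \<and>
     (\<forall>i < dim_row A. \<forall>j < dim_col A. A $$ (i, j) = cnj (A $$ (j, i)))"

definition psd_mat :: "nat \<Rightarrow> complex mat \<Rightarrow> bool" where
  "psd_mat d A \<longleftrightarrow> A \<in> carrier_mat d d \<and> hermitian_mat A \<and>
     (\<forall>v \<in> carrier_vec d. Re (cscalar_prod (A *\<^sub>v v) v) \<ge> 0)"

definition binary_povm :: "nat \<Rightarrow> complex mat \<Rightarrow> complex mat \<Rightarrow> bool" where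
  "binary_povm d E0 E1 \<longleftrightarrow> psd_mat d E0 \<and> psd_mat d E1 \<and> E0 + E1 = 1\<^sub>m d"

definition outcome_prob :: "complex mat \<Rightarrow> complex vec \<Rightarrow> real" where
  "outcome_prob E psi = Re (cscalar_prod (E *\<^sub>v psi) psi)"

definition bitstrings :: "nat \<Rightarrow> bool list set" where
  "bitstrings n = {xs. length xs = n}"

definition boolfuns :: "nat \<Rightarrow> (bool list \<Rightarrow> bool) set" where
  "boolfuns n = bitstrings n \<rightarrow>\<^sub>E (UNIV :: bool set)"

text \<open>Success probability Pr_{x,L}[Q(x,psi_L) = L(x)], with x and L uniform, where on input x
  the algorithm performs the binary measurement (M x False, M x True) and outputs the outcome.\<close>
definition success_prob ::
  "nat \<Rightarrow> ((bool list \<Rightarrow> bool) \<Rightarrow> complex vec) \<Rightarrow> (bool list \<Rightarrow> bool \<Rightarrow> complex mat) \<Rightarrow> real" where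
  "success_prob n psi M =
     (\<Sum>x \<in> bitstrings n. \<Sum>L \<in> boolfuns n. outcome_prob (M x (L x)) (psi L))
       / (real (card (bitstrings n)) * real (card (boolfuns n)))"

end

theory Submission
  imports Defs
begin


definition qip :: "nat \<Rightarrow> (nat \<Rightarrow> complex) \<Rightarrow> (nat \<Rightarrow> complex) \<Rightarrow> complex" where
  "qip d u v = (\<Sum>i<d. u i * cnj (v i))"
definition qnrm :: "nat \<Rightarrow> (nat \<Rightarrow> complex) \<Rightarrow> real" where
  "qnrm d u = (\<Sum>i<d. (cmod (u i))^2)"
definition qapp :: "nat \<Rightarrow> (nat \<Rightarrow> nat \<Rightarrow> complex) \<Rightarrow> (nat \<Rightarrow> complex) \<Rightarrow> nat \<Rightarrow> complex" where
  "qapp d A v = (\<lambda>i. if i < d then \<Sum>j<d. A i j * v j else 0)"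
definition qherm :: "nat \<Rightarrow> (nat \<Rightarrow> nat \<Rightarrow> complex) \<Rightarrow> bool" where
  "qherm d A \<longleftrightarrow> (\<forall>i<d. \<forall>j<d. A i j = cnj (A j i))"

lemma ip_self: "qip d u u = complex_of_real (qnrm d u)"
  unfolding qip_def qnrm_def of_real_sum by (intro sum.cong refl) (metis complex_norm_square of_real_power)

lemma nrm_nonneg: "0 \<le> qnrm d u"
  unfolding qnrm_def by (simp add: sum_nonneg)

lemma ip_cnj: "qip d v u = cnj (qip d u v)"
  unfolding qip_def by (simp add: mult.commute)

lemma herm_ip: assumes "qherm d A" shows "qip d (qapp d A u) v = qip d u (qapp d A v)"
proof -
  have "qip d (qapp d A u) v = (\<Sum>i<d. \<Sum>j<d. A i j * u j * cnj (v i))"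
    unfolding qip_def qapp_def by (simp add: sum_distrib_right)
  also have "\<dots> = (\<Sum>j<d. \<Sum>i<d. A i j * u j * cnj (v i))" by (rule sum.swap)
  also have "\<dots> = (\<Sum>j<d. \<Sum>i<d. u j * cnj (A j i * v i))"
  proof (intro sum.cong refl)
    fix j i assume "j \<in> {..<d}" "i \<in> {..<d}"
    then have "A i j = cnj (A j i)" using assms unfolding qherm_def by blast
    then show "A i j * u j * cnj (v i) = u j * cnj (A j i * v i)" by (simp add: mult_ac)
  qed
  also have "\<dots> = qip d u (qapp d A v)"
    unfolding qip_def qapp_def by (simp add: sum_distrib_left)
  finally show ?thesis .
qed

lemma real_cs:
  fixes a b :: "'a \<Rightarrow> real"
  shows "(\<Sum>i\<in>I. a i * b i)^2 \<le> (\<Sum>i\<in>I. (a i)^2) * (\<Sum>i\<in>I. (b i)^2)"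
proof -
  have e1: "(\<Sum>i\<in>I. \<Sum>j\<in>I. (a i)^2 * (b j)^2) = (\<Sum>i\<in>I. (a i)^2) * (\<Sum>i\<in>I. (b i)^2)"
    by (simp add: sum_product)
  have e2: "(\<Sum>i\<in>I. \<Sum>j\<in>I. (a j)^2 * (b i)^2) = (\<Sum>i\<in>I. (a i)^2) * (\<Sum>i\<in>I. (b i)^2)"
    by (subst sum.swap) (simp add: sum_product)
  have e3: "(\<Sum>i\<in>I. \<Sum>j\<in>I. a i * b i * (a j * b j)) = (\<Sum>i\<in>I. a i * b i)^2"
    by (simp add: sum_product power2_eq_square)
  have "0 \<le> (\<Sum>i\<in>I. \<Sum>j\<in>I. (a i * b j - a j * b i)^2)"
    by (intro sum_nonneg) auto
  also have "\<dots> = (\<Sum>i\<in>I. \<Sum>j\<in>I. (a i)^2 * (b j)^2 + (a j)^2 * (b i)^2 - 2 * (a i * b i * (a j * b j)))"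
    by (intro sum.cong refl) (simp add: power2_eq_square algebra_simps)
  also have "\<dots> = (\<Sum>i\<in>I. \<Sum>j\<in>I. (a i)^2 * (b j)^2) + (\<Sum>i\<in>I. \<Sum>j\<in>I. (a j)^2 * (b i)^2)
      - 2 * (\<Sum>i\<in>I. \<Sum>j\<in>I. a i * b i * (a j * b j))"
    by (simp add: sum.distrib sum_subtractf sum_distrib_left)
  finally show ?thesis unfolding e1 e2 e3 by simp
qed

lemma cs: "(cmod (qip d u v))^2 \<le> qnrm d u * qnrm d v"
proof -
  have "cmod (qip d u v) \<le> (\<Sum>i<d. cmod (u i) * cmod (v i))"
    unfolding qip_def by (rule order_trans[OF norm_sum]) (simp add: norm_mult)
  hence "(cmod (qip d u v))^2 \<le> (\<Sum>i<d. cmod (u i) * cmod (v i))^2"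
    by (rule power_mono[OF _ norm_ge_zero])
  also have "\<dots> \<le> qnrm d u * qnrm d v" unfolding qnrm_def by (rule real_cs)
  finally show ?thesis .
qed

lemma ip_diff_left: "qip d (\<lambda>i. u i - w i) v = qip d u v - qip d w v"
  unfolding qip_def by (simp add: algebra_simps sum_subtractf)
lemma ip_diff_right: "qip d v (\<lambda>i. u i - w i) = qip d v u - qip d v w"
  unfolding qip_def by (simp add: algebra_simps sum_subtractf)
lemma ip_scale_left: "qip d (\<lambda>i. c * u i) v = c * qip d u v"
  unfolding qip_def by (simp add: algebra_simps sum_distrib_left)
lemma ip_scale_right: "qip d v (\<lambda>i. c * u i) = cnj c * qip d v u"
  unfolding qip_def by (simp add: algebra_simps sum_distrib_left)
lemma app_diff: "qapp d E (\<lambda>i. v i - w i) = (\<lambda>i. qapp d E v i - qapp d E w i)"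
  unfolding qapp_def by (simp add: fun_eq_iff algebra_simps sum_subtractf)

lemma contr:
  assumes h: "qherm d E" and p0: "\<And>v. 0 \<le> Re (qip d (qapp d E v) v)"
    and p1: "\<And>v. Re (qip d (qapp d E v) v) \<le> qnrm d v"
  shows "qnrm d (\<lambda>i. v i - 2 * qapp d E v i) \<le> qnrm d v"
proof -
  define w where "w = qapp d E v"
  define a where "a = Re (qip d w v)"
  define q where "q = qnrm d w"
  have Ew: "qip d (qapp d E w) v = qip d w w" unfolding w_def using herm_ip[OF h] by simp
  have "0 \<le> Re (qip d (qapp d E (\<lambda>i. v i - w i)) (\<lambda>i. v i - w i))" by (rule p0)
  also have "\<dots> = a - 2 * q + Re (qip d (qapp d E w) w)"
    unfolding app_diff ip_diff_left ip_diff_right a_def q_def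
    by (simp add: Ew ip_self flip: w_def)
  also have "\<dots> \<le> a - q" using p1[of w] unfolding q_def by simp
  finally have qa: "q \<le> a" by simp
  have "qnrm d (\<lambda>i. v i - 2 * w i) = Re (qip d (\<lambda>i. v i - 2 * w i) (\<lambda>i. v i - 2 * w i))"
    by (simp add: ip_self)
  also have "\<dots> = qnrm d v - 4 * a + 4 * q"
    unfolding ip_diff_left ip_diff_right ip_scale_left ip_scale_right a_def q_def
    by (subst ip_cnj[of d v w]) (simp add: ip_self)
  finally show ?thesis using qa unfolding w_def by simp
qed


definition qsg :: "bool \<Rightarrow> real" where "qsg b = (if b then 1 else -1)"

definition qlsts :: "nat \<Rightarrow> 'a set \<Rightarrow> 'a list set" where
  "qlsts k X = {xs. set xs \<subseteq> X \<and> length xs = k}"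

definition qsp :: "('a \<Rightarrow> bool) \<Rightarrow> 'a list \<Rightarrow> real" where
  "qsp L xs = prod_list (map (\<lambda>x. qsg (L x)) xs)"

definition qSm :: "'a set \<Rightarrow> ('a \<Rightarrow> nat \<Rightarrow> nat \<Rightarrow> complex) \<Rightarrow> ('a \<Rightarrow> bool) \<Rightarrow> nat \<Rightarrow> nat \<Rightarrow> complex" where
  "qSm X A L = (\<lambda>i j. \<Sum>x\<in>X. complex_of_real (qsg (L x)) * A x i j)"

fun qwseq :: "nat \<Rightarrow> ('a \<Rightarrow> nat \<Rightarrow> nat \<Rightarrow> complex) \<Rightarrow> 'a list \<Rightarrow> (nat \<Rightarrow> complex) \<Rightarrow> nat \<Rightarrow> complex" where
  "qwseq d A [] v = v"
| "qwseq d A (x # xs) v = qapp d (A x) (qwseq d A xs v)"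

lemma finite_lsts: "finite X \<Longrightarrow> finite (qlsts k X)"
  unfolding qlsts_def by (rule finite_lists_length_eq)

lemma sum_lsts_Suc:
  fixes f :: "'a list \<Rightarrow> 'b::comm_monoid_add"
  assumes "finite X"
  shows "(\<Sum>xs\<in>qlsts (Suc k) X. f xs) = (\<Sum>x\<in>X. \<Sum>xs\<in>qlsts k X. f (x # xs))"
proof -
  have "(\<Sum>xs\<in>qlsts (Suc k) X. f xs) = (\<Sum>xs\<in>(\<lambda>(xs, n). n#xs) ` (qlsts k X \<times> X). f xs)"
    unfolding qlsts_def lists_length_Suc_eq ..
  also have "\<dots> = (\<Sum>(xs,n)\<in>qlsts k X \<times> X. f (n # xs))"
    by (subst sum.reindex) (auto simp: inj_on_def case_prod_unfold)
  also have "\<dots> = (\<Sum>xs\<in>qlsts k X. \<Sum>x\<in>X. f (x # xs))"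
    by (rule sum.cartesian_product[symmetric])
  also have "\<dots> = (\<Sum>x\<in>X. \<Sum>xs\<in>qlsts k X. f (x # xs))" by (rule sum.swap)
  finally show ?thesis .
qed

lemma sum_power_lsts:
  fixes f :: "'a \<Rightarrow> 'b::comm_ring_1"
  assumes "finite X"
  shows "(\<Sum>x\<in>X. f x) ^ k = (\<Sum>xs\<in>qlsts k X. prod_list (map f xs))"
proof (induction k)
  case 0
  have "qlsts 0 X = {[]}" unfolding qlsts_def by auto
  then show ?case by simp
next
  case (Suc k)
  have "(\<Sum>x\<in>X. f x) ^ Suc k = (\<Sum>x\<in>X. f x) * (\<Sum>xs\<in>qlsts k X. prod_list (map f xs))"
    using Suc by simp
  also have "\<dots> = (\<Sum>x\<in>X. \<Sum>xs\<in>qlsts k X. f x * prod_list (map f xs))"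
    by (simp add: sum_distrib_left sum_distrib_right) (rule sum.swap)
  also have "\<dots> = (\<Sum>xs\<in>qlsts (Suc k) X. prod_list (map f xs))"
    by (subst sum_lsts_Suc[OF assms]) simp
  finally show ?case .
qed

lemma app_sum: "qapp d E (\<lambda>i. \<Sum>t\<in>T. c t * f t i) = (\<lambda>i. \<Sum>t\<in>T. c t * qapp d E (f t) i)"
proof (rule ext)
  fix i
  show "qapp d E (\<lambda>i. \<Sum>t\<in>T. c t * f t i) i = (\<Sum>t\<in>T. c t * qapp d E (f t) i)"
  proof (cases "i < d")
    case True
    have "(\<Sum>j<d. E i j * (\<Sum>t\<in>T. c t * f t j)) = (\<Sum>j<d. \<Sum>t\<in>T. E i j * (c t * f t j))"
      by (simp add: sum_distrib_left)
    also have "\<dots> = (\<Sum>t\<in>T. \<Sum>j<d. E i j * (c t * f t j))" by (rule sum.swap)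
    also have "\<dots> = (\<Sum>t\<in>T. c t * (\<Sum>j<d. E i j * f t j))"
      by (simp add: sum_distrib_left mult.left_commute)
    finally show ?thesis using True unfolding qapp_def by simp
  qed (simp add: qapp_def)
qed

lemma app_Sm: "qapp d (qSm X A L) v = (\<lambda>i. \<Sum>x\<in>X. complex_of_real (qsg (L x)) * qapp d (A x) v i)"
proof (rule ext)
  fix i
  show "qapp d (qSm X A L) v i = (\<Sum>x\<in>X. complex_of_real (qsg (L x)) * qapp d (A x) v i)"
  proof (cases "i < d")
    case True
    have "(\<Sum>j<d. (\<Sum>x\<in>X. complex_of_real (qsg (L x)) * A x i j) * v j)
       = (\<Sum>j<d. \<Sum>x\<in>X. complex_of_real (qsg (L x)) * A x i j * v j)"
      by (simp add: sum_distrib_right)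
    also have "\<dots> = (\<Sum>x\<in>X. \<Sum>j<d. complex_of_real (qsg (L x)) * A x i j * v j)" by (rule sum.swap)
    also have "\<dots> = (\<Sum>x\<in>X. complex_of_real (qsg (L x)) * (\<Sum>j<d. A x i j * v j))"
      by (simp add: sum_distrib_left mult.assoc)
    finally show ?thesis using True unfolding qapp_def qSm_def by simp
  qed (simp add: qapp_def)
qed

lemma expand:
  assumes "finite X"
  shows "(qapp d (qSm X A L) ^^ k) v = (\<lambda>i. \<Sum>xs\<in>qlsts k X. complex_of_real (qsp L xs) * qwseq d A xs v i)"
proof (induction k)
  case 0
  have "qlsts 0 X = {[]}" unfolding qlsts_def by auto
  then show ?case by (simp add: qsp_def)
next
  case (Suc k)
  have "(qapp d (qSm X A L) ^^ Suc k) v = qapp d (qSm X A L) ((qapp d (qSm X A L) ^^ k) v)" by simp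
  also have "\<dots> = (\<lambda>i. \<Sum>x\<in>X. complex_of_real (qsg (L x)) *
      (\<Sum>xs\<in>qlsts k X. complex_of_real (qsp L xs) * qwseq d A (x # xs) v i))"
    unfolding Suc app_Sm app_sum
    apply (rule ext) apply (simp add: sum_distrib_left) apply (subst sum.swap) apply (simp add: mult.left_commute)
    done
  also have "\<dots> = (\<lambda>i. \<Sum>x\<in>X. \<Sum>xs\<in>qlsts k X. complex_of_real (qsp L (x # xs)) * qwseq d A (x # xs) v i)"
    by (simp add: sum_distrib_left qsp_def mult.assoc)
  also have "\<dots> = (\<lambda>i. \<Sum>xs\<in>qlsts (Suc k) X. complex_of_real (qsp L xs) * qwseq d A xs v i)"
    by (subst sum_lsts_Suc[OF assms]) simp
  finally show ?case .
qed

lemma ip_sum_left: "qip d (\<lambda>i. \<Sum>t\<in>T. f t i) v = (\<Sum>t\<in>T. qip d (f t) v)"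
  unfolding qip_def by (simp add: sum_distrib_right) (rule sum.swap)
lemma ip_sum_right: "qip d v (\<lambda>i. \<Sum>t\<in>T. f t i) = (\<Sum>t\<in>T. qip d v (f t))"
  unfolding qip_def by (simp add: sum_distrib_left cnj_sum) (rule sum.swap)

lemma nrm_expand:
  "qnrm d (\<lambda>i. \<Sum>t\<in>T. complex_of_real (c t) * w t i) =
    (\<Sum>t\<in>T. \<Sum>u\<in>T. c t * c u * Re (qip d (w t) (w u)))"
proof -
  have "complex_of_real (qnrm d (\<lambda>i. \<Sum>t\<in>T. complex_of_real (c t) * w t i)) =
     (\<Sum>t\<in>T. \<Sum>u\<in>T. complex_of_real (c t * c u) * qip d (w t) (w u))"
    unfolding ip_self[symmetric] ip_sum_left ip_sum_right ip_scale_left ip_scale_right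
    by (simp add: mult_ac)
  hence "qnrm d (\<lambda>i. \<Sum>t\<in>T. complex_of_real (c t) * w t i) =
     Re (\<Sum>t\<in>T. \<Sum>u\<in>T. complex_of_real (c t * c u) * qip d (w t) (w u))"
    by (metis Re_complex_of_real)
  thus ?thesis by (simp add: Re_sum)
qed

lemma prod_list_count:
  fixes f :: "'a \<Rightarrow> 'b::comm_monoid_mult"
  assumes "finite X" "set xs \<subseteq> X"
  shows "prod_list (map f xs) = (\<Prod>x\<in>X. f x ^ count_list xs x)"
  using assms(2)
proof (induction xs)
  case Nil
  then show ?case by simp
next
  case (Cons y xs)
  have "(\<Prod>x\<in>X. f x ^ count_list (y # xs) x) = (\<Prod>x\<in>X. (if x = y then f x else 1) * f x ^ count_list xs x)"
    by (intro prod.cong refl) auto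
  also have "\<dots> = (\<Prod>x\<in>X. (if x = y then f x else 1)) * (\<Prod>x\<in>X. f x ^ count_list xs x)"
    by (rule prod.distrib)
  also have "(\<Prod>x\<in>X. (if x = y then f x else 1)) = f y"
    using Cons.prems assms(1) by (simp add: prod.delta')
  finally show ?case using Cons by simp
qed

lemma sum_sp_nonneg:
  assumes "finite X" "set xs \<subseteq> X"
  shows "0 \<le> (\<Sum>L\<in>X \<rightarrow>\<^sub>E (UNIV::bool set). qsp L xs)"
proof -
  have "(\<Sum>L\<in>X \<rightarrow>\<^sub>E (UNIV::bool set). qsp L xs) =
      (\<Sum>L\<in>X \<rightarrow>\<^sub>E (UNIV::bool set). \<Prod>x\<in>X. qsg (L x) ^ count_list xs x)"
    unfolding qsp_def by (intro sum.cong refl) (simp add: prod_list_count[OF assms])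
  also have "\<dots> = (\<Prod>x\<in>X. \<Sum>b\<in>(UNIV::bool set). qsg b ^ count_list xs x)"
    by (rule prod_sum_PiE[symmetric]) (use assms in auto)
  also have "\<dots> \<ge> 0"
  proof (intro prod_nonneg)
    fix x
    show "0 \<le> (\<Sum>b\<in>(UNIV::bool set). qsg b ^ count_list xs x)"
      by (cases "even (count_list xs x)") (auto simp: UNIV_bool qsg_def)
  qed
  finally show ?thesis .
qed


lemma wseq_contr:
  assumes "\<forall>x\<in>X. \<forall>v. qnrm d (qapp d (A x) v) \<le> qnrm d v" "set xs \<subseteq> X"
  shows "qnrm d (qwseq d A xs v) \<le> qnrm d v"
  using assms(2)
proof (induction xs)
  case (Cons x xs)
  then have "qnrm d (qwseq d A (x # xs) v) \<le> qnrm d (qwseq d A xs v)" using assms(1) by simp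
  then show ?case using Cons by simp
qed simp

lemma sp_append: "qsp L (xs @ ys) = qsp L xs * qsp L ys"
  unfolding qsp_def by simp

lemma moment_vec:
  assumes fin: "finite X" and con: "\<forall>x\<in>X. \<forall>v. qnrm d (qapp d (A x) v) \<le> qnrm d v"
    and u1: "qnrm d u \<le> 1"
  shows "(\<Sum>L\<in>X \<rightarrow>\<^sub>E (UNIV::bool set). qnrm d ((qapp d (qSm X A L) ^^ k) u))
     \<le> (\<Sum>L\<in>X \<rightarrow>\<^sub>E (UNIV::bool set). (\<Sum>x\<in>X. qsg (L x)) ^ (2*k))"
proof -
  define F where "F = X \<rightarrow>\<^sub>E (UNIV::bool set)"
  define T where "T = qlsts k X"
  define R where "R = (\<lambda>xs ys. Re (qip d (qwseq d A xs u) (qwseq d A ys u)))"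
  have R1: "R xs ys \<le> 1" if "xs \<in> T" "ys \<in> T" for xs ys
  proof -
    have a: "qnrm d (qwseq d A xs u) \<le> 1" "qnrm d (qwseq d A ys u) \<le> 1"
      using wseq_contr[OF con, of xs u] wseq_contr[OF con, of ys u] that u1
      unfolding T_def qlsts_def by auto
    have "(cmod (qip d (qwseq d A xs u) (qwseq d A ys u)))^2 \<le> 1"
      using cs[of d "qwseq d A xs u" "qwseq d A ys u"] mult_le_one[OF a(1) nrm_nonneg a(2)]
      by linarith
    hence "cmod (qip d (qwseq d A xs u) (qwseq d A ys u)) \<le> 1"
      by (simp add: power_le_one_iff)
    thus ?thesis unfolding R_def using complex_Re_le_cmod order_trans by blast
  qed
  have c0: "0 \<le> (\<Sum>L\<in>F. qsp L xs * qsp L ys)" if "xs \<in> T" "ys \<in> T" for xs ys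
    using sum_sp_nonneg[OF fin, of "xs @ ys"] that unfolding F_def T_def qlsts_def
    by (simp add: sp_append)
  have "(\<Sum>L\<in>F. qnrm d ((qapp d (qSm X A L) ^^ k) u))
      = (\<Sum>L\<in>F. \<Sum>xs\<in>T. \<Sum>ys\<in>T. qsp L xs * qsp L ys * R xs ys)"
    unfolding expand[OF fin] nrm_expand T_def R_def ..
  also have "\<dots> = (\<Sum>xs\<in>T. \<Sum>ys\<in>T. (\<Sum>L\<in>F. qsp L xs * qsp L ys) * R xs ys)"
  proof -
    have "(\<Sum>L\<in>F. \<Sum>xs\<in>T. \<Sum>ys\<in>T. qsp L xs * qsp L ys * R xs ys)
       = (\<Sum>xs\<in>T. \<Sum>L\<in>F. \<Sum>ys\<in>T. qsp L xs * qsp L ys * R xs ys)" by (rule sum.swap)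
    also have "\<dots> = (\<Sum>xs\<in>T. \<Sum>ys\<in>T. \<Sum>L\<in>F. qsp L xs * qsp L ys * R xs ys)"
      by (rule sum.cong[OF refl], rule sum.swap)
    finally show ?thesis by (simp add: sum_distrib_right)
  qed
  also have "\<dots> \<le> (\<Sum>xs\<in>T. \<Sum>ys\<in>T. (\<Sum>L\<in>F. qsp L xs * qsp L ys))"
    by (intro sum_mono mult_left_le R1 c0)
  also have "\<dots> = (\<Sum>L\<in>F. (\<Sum>xs\<in>T. qsp L xs) * (\<Sum>ys\<in>T. qsp L ys))"
  proof -
    have "(\<Sum>xs\<in>T. \<Sum>ys\<in>T. \<Sum>L\<in>F. qsp L xs * qsp L ys)
       = (\<Sum>xs\<in>T. \<Sum>L\<in>F. \<Sum>ys\<in>T. qsp L xs * qsp L ys)"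
      by (rule sum.cong[OF refl], rule sum.swap)
    also have "\<dots> = (\<Sum>L\<in>F. \<Sum>xs\<in>T. \<Sum>ys\<in>T. qsp L xs * qsp L ys)" by (rule sum.swap)
    finally show ?thesis by (simp add: sum_product)
  qed
  also have "\<dots> = (\<Sum>L\<in>F. (\<Sum>x\<in>X. qsg (L x)) ^ (2*k))"
    unfolding T_def qsp_def sum_power_lsts[OF fin, symmetric]
    by (simp add: power_mult power2_eq_square mult.commute)
  finally show ?thesis unfolding F_def .
qed

lemma exp_taylor_lower:
  fixes z :: real
  assumes "0 \<le> z"
  shows "z ^ n / fact n \<le> exp z"
proof -
  have sm: "summable (\<lambda>m. z ^ m /\<^sub>R fact m)" using exp_converges sums_summable by blast
  have "sum (\<lambda>m. z ^ m /\<^sub>R fact m) {n} \<le> suminf (\<lambda>m. z ^ m /\<^sub>R fact m)"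
    by (rule sum_le_suminf[OF sm]) (use assms in auto)
  also have "\<dots> = exp z" using exp_converges sums_unique by metis
  finally show ?thesis by (simp add: divide_inverse mult.commute)
qed

lemma exp_quad_lower:
  fixes z :: real
  assumes "0 \<le> z"
  shows "1 + z + z^2 / 4 \<le> exp z"
proof -
  have "1 + z + z^2 / 4 = (1 + z/2)^2" by (simp add: power2_eq_square field_simps)
  also have "\<dots> \<le> (exp (z/2))^2"
    by (rule power_mono[OF exp_ge_add_one_self]) (use assms in simp)
  also have "\<dots> = exp z" by (simp add: power2_eq_square flip: exp_add)
  finally show ?thesis .
qed

lemma cosh_bound:
  fixes t :: real
  assumes "0 \<le> t" "t \<le> 1"
  shows "exp t + exp (-t) \<le> 2 * exp (t^2)"
proof -
  have e1: "exp t \<le> 1 + t + t^2" using exp_bound assms by blast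
  define q where "q = 1 + t + t^2 / 4"
  have q0: "0 < q" unfolding q_def using assms by (simp add: add_pos_nonneg)
  have qe: "q \<le> exp t" unfolding q_def by (rule exp_quad_lower[OF assms(1)])
  have prod: "1 \<le> (1 - t + t^2) * q"
  proof -
    have "(1 - t + t^2) * q = 1 + t^2/4 + 3*t^3/4 + t^4/4" unfolding q_def
      by (simp add: field_simps power2_eq_square power3_eq_cube power4_eq_xxxx)
    thus ?thesis using assms by simp
  qed
  have "exp (-t) = 1 / exp t" by (simp add: exp_minus divide_inverse)
  also have "\<dots> \<le> 1 / q" using q0 qe by (simp add: frac_le)
  also have "\<dots> \<le> 1 - t + t^2" using prod q0 by (simp add: divide_le_eq mult.commute)
  finally have e2: "exp (-t) \<le> 1 - t + t^2" .
  have "1 + t^2 \<le> exp (t^2)" by (rule exp_ge_add_one_self)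
  thus ?thesis using e1 e2 by linarith
qed

lemma sum_exp_PiE:
  assumes "finite X"
  shows "(\<Sum>L\<in>X \<rightarrow>\<^sub>E (UNIV::bool set). exp (c * (\<Sum>x\<in>X. qsg (L x)))) = (exp c + exp (-c)) ^ card X"
proof -
  have "(\<Sum>L\<in>X \<rightarrow>\<^sub>E (UNIV::bool set). exp (c * (\<Sum>x\<in>X. qsg (L x))))
     = (\<Sum>L\<in>X \<rightarrow>\<^sub>E (UNIV::bool set). \<Prod>x\<in>X. exp (c * qsg (L x)))"
    by (intro sum.cong refl) (simp add: sum_distrib_left exp_sum[OF assms])
  also have "\<dots> = (\<Prod>x\<in>X. \<Sum>b\<in>(UNIV::bool set). exp (c * qsg b))"
    by (rule prod_sum_PiE[symmetric]) (use assms in auto)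
  also have "\<dots> = (exp c + exp (-c)) ^ card X"
    by (simp add: UNIV_bool qsg_def add.commute)
  finally show ?thesis .
qed

lemma scalar_moment:
  assumes fin: "finite X" and k1: "1 \<le> k" and kN: "k \<le> card X"
  shows "(\<Sum>L\<in>X \<rightarrow>\<^sub>E (UNIV::bool set). (\<Sum>x\<in>X. qsg (L x)) ^ (2*k))
     \<le> 2 * 2 ^ card X * (12 * real k * real (card X)) ^ k"
proof -
  define N where "N = card X"
  define F where "F = X \<rightarrow>\<^sub>E (UNIV::bool set)"
  define y where "y = (\<lambda>L. \<Sum>x\<in>X. qsg (L x))"
  define t where "t = sqrt (real k / real N)"
  have N0: "0 < real N" using k1 kN unfolding N_def by simp
  have k0: "0 < real k" using k1 by simp
  have t0: "0 \<le> t" unfolding t_def by simp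
  have t2: "t^2 = real k / real N" unfolding t_def using N0 by simp
  have t1: "t \<le> 1" unfolding t_def using kN N0 unfolding N_def by (simp add: real_sqrt_le_1_iff)
  have pt: "(t * y L) ^ (2*k) \<le> fact (2*k) * (exp (t * y L) + exp (-(t * y L)))" for L
  proof -
    have "(t * y L) ^ (2*k) = \<bar>t * y L\<bar> ^ (2*k)" by (simp add: power_even_abs)
    also have "\<dots> \<le> fact (2*k) * exp \<bar>t * y L\<bar>"
      using exp_taylor_lower[of "\<bar>t * y L\<bar>" "2*k"] by (simp add: divide_le_eq mult.commute)
    also have "\<dots> \<le> fact (2*k) * (exp (t * y L) + exp (-(t * y L)))"
      by (intro mult_left_mono) (auto simp: abs_if add_increasing add_increasing2)
    finally show ?thesis .
  qed
  have "t ^ (2*k) * (\<Sum>L\<in>F. y L ^ (2*k)) = (\<Sum>L\<in>F. (t * y L) ^ (2*k))"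
    by (simp add: sum_distrib_left power_mult_distrib)
  also have "\<dots> \<le> (\<Sum>L\<in>F. fact (2*k) * (exp (t * y L) + exp (-(t * y L))))"
    by (intro sum_mono pt)
  also have "\<dots> = fact (2*k) * ((\<Sum>L\<in>F. exp (t * y L)) + (\<Sum>L\<in>F. exp ((-t) * y L)))"
    by (simp add: sum.distrib distrib_left sum_distrib_left)
  also have "\<dots> = fact (2*k) * (2 * (exp t + exp (-t)) ^ N)"
    unfolding F_def y_def sum_exp_PiE[OF fin] N_def by (simp add: add.commute)
  also have "\<dots> \<le> fact (2*k) * (2 * (2 * exp (t^2)) ^ N)"
    using cosh_bound[OF t0 t1] by (intro mult_left_mono power_mono) auto
  also have "(2 * exp (t^2)) ^ N = 2 ^ N * exp (real k)"
    using N0 by (simp add: power_mult_distrib exp_of_nat_mult[symmetric] t2)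
  also have "exp (real k) = exp 1 ^ k" using exp_of_nat_mult[of k 1] by simp
  also have "fact (2*k) * (2 * (2 ^ N * exp 1 ^ k)) \<le> real ((2*k) ^ (2*k)) * (2 * (2 ^ N * 3 ^ k))"
    by (intro mult_mono fact_le_power mult_left_mono power_mono exp_le) auto
  finally have A: "t ^ (2*k) * (\<Sum>L\<in>F. y L ^ (2*k)) \<le> real ((2*k) ^ (2*k)) * (2 * (2 ^ N * 3 ^ k))" .
  have tk: "t ^ (2*k) = (real k / real N) ^ k" by (simp add: power_mult t2)
  have pos: "0 < (real k / real N) ^ k" using k0 N0 by simp
  have "(\<Sum>L\<in>F. y L ^ (2*k)) \<le> real ((2*k) ^ (2*k)) * (2 * (2 ^ N * 3 ^ k)) / (real k / real N) ^ k"
    using A pos unfolding tk by (simp add: le_divide_eq mult.commute)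
  also have "\<dots> = 2 * 2 ^ N * ((4 * real k ^ 2) * 3 / (real k / real N)) ^ k"
  proof -
    have h: "(4::real)^k * 3^k = 12^k" by (simp flip: power_mult_distrib)
    show ?thesis using k1 by (simp add: power_mult power_mult_distrib power_divide power2_eq_square h)
  qed
  also have "(4 * real k ^ 2) * 3 / (real k / real N) = 12 * real k * real N"
    using k0 N0 by (simp add: field_simps power2_eq_square)
  finally show ?thesis unfolding F_def y_def N_def .
qed


lemma herm_Sm:
  assumes "\<forall>x\<in>X. qherm d (A x)"
  shows "qherm d (qSm X A L)"
  unfolding qherm_def
proof (intro allI impI)
  fix i j assume ij: "i < d" "j < d"
  have "\<And>x. x \<in> X \<Longrightarrow> A x i j = cnj (A x j i)" using assms ij unfolding qherm_def by blast
  then show "qSm X A L i j = cnj (qSm X A L j i)"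
    unfolding qSm_def cnj_sum by (intro sum.cong refl) simp
qed

lemma herm_pow:
  assumes "qherm d S"
  shows "qip d ((qapp d S ^^ a) u) ((qapp d S ^^ b) v) = qip d ((qapp d S ^^ (a + b)) u) v"
proof (induction b arbitrary: a)
  case 0
  then show ?case by simp
next
  case (Suc b)
  have "qip d ((qapp d S ^^ a) u) ((qapp d S ^^ Suc b) v) = qip d ((qapp d S ^^ a) u) (qapp d S ((qapp d S ^^ b) v))"
    by simp
  also have "\<dots> = qip d (qapp d S ((qapp d S ^^ a) u)) ((qapp d S ^^ b) v)"
    by (rule herm_ip[OF assms, symmetric])
  also have "\<dots> = qip d ((qapp d S ^^ Suc a) u) ((qapp d S ^^ b) v)" by simp
  also have "\<dots> = qip d ((qapp d S ^^ (Suc a + b)) u) v" by (rule Suc.IH)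
  finally show ?case by simp
qed

lemma iter_cs:
  assumes h: "qherm d S" and n1: "qnrm d psi = 1"
  shows "\<bar>Re (qip d (qapp d S psi) psi)\<bar> ^ (2 ^ Suc m) \<le> qnrm d ((qapp d S ^^ (2 ^ m)) psi)"
proof (induction m)
  case 0
  have "\<bar>Re (qip d (qapp d S psi) psi)\<bar> ^ 2 \<le> (cmod (qip d (qapp d S psi) psi)) ^ 2"
    by (rule power_mono[OF abs_Re_le_cmod abs_ge_zero])
  also have "\<dots> \<le> qnrm d (qapp d S psi) * qnrm d psi" by (rule cs)
  finally show ?case using n1 by simp
next
  case (Suc m)
  define a :: nat where "a = 2 ^ m"
  have q: "complex_of_real (qnrm d ((qapp d S ^^ a) psi)) = qip d ((qapp d S ^^ (a + a)) psi) psi"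
    unfolding ip_self[symmetric] herm_pow[OF h] ..
  have "qnrm d ((qapp d S ^^ a) psi) ^ 2 \<le> (cmod (qip d ((qapp d S ^^ (a + a)) psi) psi)) ^ 2"
    unfolding q[symmetric] by (simp add: abs_of_nonneg nrm_nonneg)
  also have "\<dots> \<le> qnrm d ((qapp d S ^^ (a + a)) psi) * qnrm d psi" by (rule cs)
  finally have st: "qnrm d ((qapp d S ^^ a) psi) ^ 2 \<le> qnrm d ((qapp d S ^^ (2 ^ Suc m)) psi)"
    using n1 unfolding a_def by (simp add: mult_2)
  have "\<bar>Re (qip d (qapp d S psi) psi)\<bar> ^ (2 ^ Suc (Suc m)) = (\<bar>Re (qip d (qapp d S psi) psi)\<bar> ^ (2 ^ Suc m)) ^ 2"
    by (simp add: power_mult[symmetric] mult.commute)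
  also have "\<dots> \<le> qnrm d ((qapp d S ^^ a) psi) ^ 2"
    using Suc.IH unfolding a_def by (rule power_mono) simp
  finally show ?case using st by linarith
qed

lemma app_pow_sum:
  "(qapp d E ^^ k) (\<lambda>j. \<Sum>i\<in>T. c i * f i j) = (\<lambda>j. \<Sum>i\<in>T. c i * (qapp d E ^^ k) (f i) j)"
proof (induction k)
  case (Suc k)
  show ?case by (simp add: Suc app_sum)
qed simp

definition qev :: "nat \<Rightarrow> nat \<Rightarrow> complex" where "qev i = (\<lambda>j. if j = i then 1 else 0)"

lemma nrm_ev: assumes "i < d" shows "qnrm d (qev i) = 1"
proof -
  have "qnrm d (qev i) = (\<Sum>ia<d. if ia = i then 1 else 0)"
    unfolding qnrm_def qev_def by (intro sum.cong) auto
  also have "\<dots> = 1" using assms by simp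
  finally show ?thesis .
qed

lemma nrm_comb:
  "qnrm d (\<lambda>j. \<Sum>i\<in>T. c i * f i j) \<le> (\<Sum>i\<in>T. (cmod (c i))^2) * (\<Sum>i\<in>T. qnrm d (f i))"
proof -
  have "qnrm d (\<lambda>j. \<Sum>i\<in>T. c i * f i j) \<le> (\<Sum>j<d. (\<Sum>i\<in>T. (cmod (c i))^2) * (\<Sum>i\<in>T. (cmod (f i j))^2))"
    unfolding qnrm_def
  proof (rule sum_mono)
    fix j
    have "cmod (\<Sum>i\<in>T. c i * f i j) \<le> (\<Sum>i\<in>T. cmod (c i) * cmod (f i j))"
      by (rule order_trans[OF norm_sum]) (simp add: norm_mult)
    hence "(cmod (\<Sum>i\<in>T. c i * f i j))^2 \<le> (\<Sum>i\<in>T. cmod (c i) * cmod (f i j))^2"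
      by (rule power_mono[OF _ norm_ge_zero])
    also have "\<dots> \<le> (\<Sum>i\<in>T. (cmod (c i))^2) * (\<Sum>i\<in>T. (cmod (f i j))^2)" by (rule real_cs)
    finally show "(cmod (\<Sum>i\<in>T. c i * f i j))^2 \<le> (\<Sum>i\<in>T. (cmod (c i))^2) * (\<Sum>i\<in>T. (cmod (f i j))^2)" .
  qed
  also have "\<dots> = (\<Sum>i\<in>T. (cmod (c i))^2) * (\<Sum>j<d. \<Sum>i\<in>T. (cmod (f i j))^2)"
    by (simp add: sum_distrib_left)
  also have "(\<Sum>j<d. \<Sum>i\<in>T. (cmod (f i j))^2) = (\<Sum>i\<in>T. qnrm d (f i))"
    unfolding qnrm_def by (rule sum.swap)
  finally show ?thesis .
qed

lemma basis_bound:
  assumes supp: "\<forall>j\<ge>d. psi j = 0" and n1: "qnrm d psi = 1"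
  shows "qnrm d ((qapp d S ^^ k) psi) \<le> (\<Sum>i<d. qnrm d ((qapp d S ^^ k) (qev i)))"
proof -
  have psi: "psi = (\<lambda>j. \<Sum>i<d. psi i * qev i j)"
  proof (rule ext)
    fix j
    show "psi j = (\<Sum>i<d. psi i * qev i j)"
      using supp unfolding qev_def by (cases "j < d") (auto simp: if_distrib cong: if_cong)
  qed
  have "qnrm d ((qapp d S ^^ k) psi) = qnrm d (\<lambda>j. \<Sum>i<d. psi i * (qapp d S ^^ k) (qev i) j)"
    by (subst psi) (simp only: app_pow_sum)
  also have "\<dots> \<le> (\<Sum>i<d. (cmod (psi i))^2) * (\<Sum>i<d. qnrm d ((qapp d S ^^ k) (qev i)))"
    by (rule nrm_comb)
  also have "(\<Sum>i<d. (cmod (psi i))^2) = 1" using n1 unfolding qnrm_def .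
  finally show ?thesis by simp
qed

lemma bernoulli_avg:
  fixes x :: "'b \<Rightarrow> real"
  assumes fin: "finite F" and n1: "1 \<le> n" and T0: "0 < T" and x0: "\<And>L. L \<in> F \<Longrightarrow> 0 \<le> x L"
    and sm: "(\<Sum>L\<in>F. x L ^ n) \<le> real (card F) * T ^ n"
  shows "(\<Sum>L\<in>F. x L) \<le> real (card F) * T"
proof -
  have pt: "x L \<le> T + T / real n * ((x L / T) ^ n - 1)" if "L \<in> F" for L
  proof -
    have "1 + real n * (x L / T - 1) \<le> (1 + (x L / T - 1)) ^ n"
      by (rule Bernoulli_inequality) (use x0[OF that] T0 in simp)
    hence "1 + real n * (x L / T - 1) \<le> (x L / T) ^ n" by simp
    hence "x L / T - 1 \<le> ((x L / T) ^ n - 1) / real n" using n1 by (simp add: field_simps)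
    hence "x L / T \<le> 1 + ((x L / T) ^ n - 1) / real n" by simp
    hence "x L \<le> T * (1 + ((x L / T) ^ n - 1) / real n)" using T0 by (simp add: divide_le_eq mult.commute)
    moreover have "T * (1 + ((x L / T) ^ n - 1) / real n) = T + T / real n * ((x L / T) ^ n - 1)"
      using n1 by (simp add: field_simps)
    ultimately show ?thesis by simp
  qed
  have "(\<Sum>L\<in>F. x L) \<le> (\<Sum>L\<in>F. T + T / real n * ((x L / T) ^ n - 1))"
    by (rule sum_mono[OF pt])
  also have "\<dots> = real (card F) * T + T / real n * (\<Sum>L\<in>F. (x L / T) ^ n - 1)"
    by (simp add: sum.distrib sum_distrib_left)
  also have "\<dots> = real (card F) * T + T / real n * ((\<Sum>L\<in>F. x L ^ n) / T ^ n - real (card F))"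
    by (simp add: sum_subtractf power_divide sum_divide_distrib)
  also have "\<dots> \<le> real (card F) * T"
  proof -
    have "(\<Sum>L\<in>F. x L ^ n) / T ^ n \<le> real (card F)" using sm T0 by (simp add: divide_le_eq)
    hence "T / real n * ((\<Sum>L\<in>F. x L ^ n) / T ^ n - real (card F)) \<le> 0"
      using T0 n1 by (intro mult_nonneg_nonpos) auto
    thus ?thesis by simp
  qed
  finally show ?thesis .
qed

lemma pow2_between:
  fixes p :: nat
  assumes "1 \<le> p"
  shows "\<exists>m. p \<le> 2 ^ m \<and> 2 ^ m < 2 * p"
proof -
  define m where "m = (LEAST m. p \<le> (2::nat) ^ m)"
  have ex: "p \<le> 2 ^ p" using less_exp[of p] by simp
  have pm: "p \<le> 2 ^ m" unfolding m_def by (rule LeastI[of _ p]) (rule ex)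
  have "2 ^ m < 2 * p"
  proof (cases m)
    case 0
    then show ?thesis using assms by simp
  next
    case (Suc m')
    have "\<not> p \<le> 2 ^ m'" using not_less_Least[of m' "\<lambda>m. p \<le> 2 ^ m"] Suc unfolding m_def by simp
    then show ?thesis using Suc by simp
  qed
  then show ?thesis using pm by blast
qed


lemma numeric_bound:
  fixes p k N :: nat
  assumes k1: "1 \<le> k" and pk: "p \<le> k" and kp: "k \<le> 2 * p"
  shows "(2::real) ^ p * (2 * (12 * real k * real N) ^ k) \<le> (100 * real p * real N) ^ k"
proof -
  have "(2::real) * 2 ^ k = 2 ^ Suc k" by simp
  also have "\<dots> \<le> 2 ^ (2 * k)" by (rule power_increasing) (use k1 in auto)
  also have "\<dots> = 4 ^ k" by (simp add: power_mult)
  finally have h1: "(2::real) * 2 ^ k \<le> 4 ^ k" .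
  have "real k \<le> 2 * real p" using kp by linarith
  then have h2: "12 * real k * real N \<le> 24 * real p * real N"
    by (intro mult_right_mono) auto
  have h0: "(2::real) ^ p \<le> 2 ^ k" by (rule power_increasing[OF pk]) simp
  have "(2::real) ^ p * (2 * (12 * real k * real N) ^ k) \<le> 2 ^ k * (2 * (12 * real k * real N) ^ k)"
    by (rule mult_right_mono[OF h0]) simp
  also have "\<dots> = (2 * 2 ^ k) * (12 * real k * real N) ^ k" by (simp only: ac_simps)
  also have "\<dots> \<le> 4 ^ k * (24 * real p * real N) ^ k"
    by (rule mult_mono[OF h1 power_mono[OF h2]]) auto
  also have "\<dots> = (4 * (24 * real p * real N)) ^ k" by (rule power_mult_distrib[symmetric])
  also have "\<dots> \<le> (100 * real p * real N) ^ k" by (rule power_mono) auto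
  finally show ?thesis .
qed

theorem bias_bound:
  fixes X :: "'a set" and A :: "'a \<Rightarrow> nat \<Rightarrow> nat \<Rightarrow> complex"
    and psi :: "('a \<Rightarrow> bool) \<Rightarrow> nat \<Rightarrow> complex" and p d :: nat
  assumes fin: "finite X" and p1: "1 \<le> p" and pN: "2 * p \<le> card X" and dd: "d = 2 ^ p"
    and hA: "\<forall>x\<in>X. qherm d (A x)" and cA: "\<forall>x\<in>X. \<forall>v. qnrm d (qapp d (A x) v) \<le> qnrm d v"
    and ps: "\<forall>L\<in>X \<rightarrow>\<^sub>E (UNIV::bool set). qnrm d (psi L) = 1 \<and> (\<forall>j\<ge>d. psi L j = 0)"
  shows "(\<Sum>L\<in>X \<rightarrow>\<^sub>E (UNIV::bool set). Re (qip d (qapp d (qSm X A L) (psi L)) (psi L)))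
     \<le> 2 ^ card X * (10 * sqrt (real p * real (card X)))"
proof -
  define N where "N = card X"
  define F where "F = X \<rightarrow>\<^sub>E (UNIV::bool set)"
  have finF: "finite F" unfolding F_def using fin by (simp add: finite_PiE)
  have cardF: "card F = 2 ^ N" unfolding F_def N_def using fin by (simp add: card_PiE)
  obtain m where m: "p \<le> 2 ^ m" "2 ^ m < 2 * p" using pow2_between[OF p1] by blast
  define k :: nat where "k = 2 ^ m"
  have k1: "1 \<le> k" unfolding k_def by simp
  have kN: "k \<le> N" using m pN unfolding k_def N_def by simp
  define lam where "lam = (\<lambda>L. Re (qip d (qapp d (qSm X A L) (psi L)) (psi L)))"
  define a where "a = (\<lambda>L. \<Sum>i<d. qnrm d ((qapp d (qSm X A L) ^^ k) (qev i)))"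
  have la: "\<bar>lam L\<bar> ^ (2 * k) \<le> a L" if "L \<in> F" for L
  proof -
    have n1: "qnrm d (psi L) = 1" and sp0: "\<forall>j\<ge>d. psi L j = 0" using ps that unfolding F_def by auto
    have "\<bar>lam L\<bar> ^ (2 * k) \<le> qnrm d ((qapp d (qSm X A L) ^^ k) (psi L))"
      using iter_cs[OF herm_Sm[OF hA] n1, where m=m] unfolding lam_def k_def by (simp add: mult.commute)
    also have "\<dots> \<le> a L" unfolding a_def by (rule basis_bound[OF sp0 n1])
    finally show ?thesis .
  qed
  have "(\<Sum>L\<in>F. a L) = (\<Sum>i<d. \<Sum>L\<in>F. qnrm d ((qapp d (qSm X A L) ^^ k) (qev i)))"
    unfolding a_def by (rule sum.swap)
  also have "\<dots> \<le> (\<Sum>i<d. \<Sum>L\<in>F. (\<Sum>x\<in>X. qsg (L x)) ^ (2*k))"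
    unfolding F_def by (intro sum_mono moment_vec[OF fin cA]) (simp add: nrm_ev)
  also have "\<dots> = real d * (\<Sum>L\<in>F. (\<Sum>x\<in>X. qsg (L x)) ^ (2*k))" by simp
  also have "\<dots> \<le> real d * (2 * 2 ^ N * (12 * real k * real N) ^ k)"
    unfolding F_def N_def by (intro mult_left_mono scalar_moment[OF fin k1]) (use kN N_def in auto)
  also have "\<dots> = 2 ^ N * ((2::real) ^ p * (2 * (12 * real k * real N) ^ k))"
    unfolding dd by simp
  also have "\<dots> \<le> 2 ^ N * (100 * real p * real N) ^ k"
    using m unfolding k_def by (intro mult_left_mono numeric_bound) auto
  finally have sa: "(\<Sum>L\<in>F. a L) \<le> 2 ^ N * (100 * real p * real N) ^ k" .
  define T where "T = 10 * sqrt (real p * real N)"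
  have T0: "0 < T" unfolding T_def using p1 k1 kN by simp
  have T2: "T ^ (2 * k) = (100 * real p * real N) ^ k"
    unfolding T_def by (simp add: power_mult power_mult_distrib)
  have "(\<Sum>L\<in>F. \<bar>lam L\<bar> ^ (2 * k)) \<le> (\<Sum>L\<in>F. a L)" by (intro sum_mono la)
  also have "\<dots> \<le> real (card F) * T ^ (2 * k)" using sa unfolding cardF T2 by simp
  finally have "(\<Sum>L\<in>F. \<bar>lam L\<bar>) \<le> real (card F) * T"
    by (intro bernoulli_avg[OF finF _ T0]) (use k1 in auto)
  moreover have "(\<Sum>L\<in>F. lam L) \<le> (\<Sum>L\<in>F. \<bar>lam L\<bar>)" by (intro sum_mono) simp
  ultimately show ?thesis unfolding lam_def F_def T_def N_def cardF[unfolded F_def N_def] by simp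
qed


lemma sum_trunc:
  fixes d D :: nat and f :: "nat \<Rightarrow> 'b::comm_monoid_add"
  assumes "d \<le> D" "\<And>i. d \<le> i \<Longrightarrow> i < D \<Longrightarrow> f i = 0"
  shows "(\<Sum>i<D. f i) = (\<Sum>i<d. f i)"
proof (rule sum.mono_neutral_right)
  show "finite {..<D}" by simp
  show "{..<d} \<subseteq> {..<D}" using assms(1) by auto
  show "\<forall>i\<in>{..<D} - {..<d}. f i = 0" using assms(2) by auto
qed

lemma cprod_eq:
  assumes E: "E \<in> carrier_mat D D" and v: "v \<in> carrier_vec d" and dD: "d \<le> D"
    and w: "\<And>i. i < d \<Longrightarrow> w i = v $ i"
  shows "(E *\<^sub>v v) \<bullet>c v = qip d (qapp d (\<lambda>i j. E $$ (i,j)) w) w"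
proof -
  have dimE: "dim_row E = D" "dim_col E = D" using E by auto
  have dimv: "dim_vec v = d" using v by auto
  have row: "(E *\<^sub>v v) $ i = (\<Sum>j<d. E $$ (i,j) * w j)" if i: "i < d" for i
  proof -
    have "(E *\<^sub>v v) $ i = row E i \<bullet> v" using i dD dimE by simp
    also have "\<dots> = (\<Sum>j\<in>{0..<d}. row E i $ j * v $ j)" unfolding scalar_prod_def dimv ..
    also have "\<dots> = (\<Sum>j<d. E $$ (i,j) * w j)"
      using i dD dimE w by (intro sum.cong) (auto simp: atLeast0LessThan)
    finally show ?thesis .
  qed
  have "(E *\<^sub>v v) \<bullet>c v = (\<Sum>i\<in>{0..<d}. (E *\<^sub>v v) $ i * conjugate v $ i)"
    unfolding scalar_prod_def by (simp add: dimv)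
  also have "\<dots> = (\<Sum>i<d. qapp d (\<lambda>i j. E $$ (i,j)) w i * cnj (w i))"
    using row w dimv by (intro sum.cong) (auto simp: atLeast0LessThan qapp_def)
  finally show ?thesis unfolding qip_def .
qed

lemma trunc_ip:
  assumes "d \<le> D"
  shows "qip D (qapp D E (\<lambda>i. if i < d then w i else 0)) (\<lambda>i. if i < d then w i else 0) = qip d (qapp d E w) w"
proof -
  let ?z = "\<lambda>i. if i < d then w i else 0"
  have "qip D (qapp D E ?z) ?z = (\<Sum>i<d. qapp D E ?z i * cnj (?z i))"
    unfolding qip_def by (rule sum_trunc[OF assms]) simp
  also have "\<dots> = (\<Sum>i<d. qapp d E w i * cnj (w i))"
  proof (intro sum.cong refl)
    fix i assume i: "i \<in> {..<d}"
    have "qapp D E ?z i = (\<Sum>j<D. E i j * ?z j)" using i assms by (simp add: qapp_def)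
    also have "\<dots> = (\<Sum>j<d. E i j * ?z j)" by (rule sum_trunc[OF assms]) simp
    also have "\<dots> = qapp d E w i" using i by (simp add: qapp_def)
    finally show "qapp D E ?z i * cnj (?z i) = qapp d E w i * cnj (w i)" using i by simp
  qed
  finally show ?thesis unfolding qip_def .
qed

lemma psd_bridge:
  assumes ps: "psd_mat D E" and dD: "d \<le> D"
  shows "0 \<le> Re (qip d (qapp d (\<lambda>i j. E $$ (i,j)) w) w)"
proof -
  define v where "v = vec D (\<lambda>i. if i < d then w i else 0)"
  have v: "v \<in> carrier_vec D" by (simp add: v_def)
  have E: "E \<in> carrier_mat D D" using ps unfolding psd_mat_def by auto
  have "0 \<le> Re ((E *\<^sub>v v) \<bullet>c v)" using ps v unfolding psd_mat_def by auto
  also have "(E *\<^sub>v v) \<bullet>c v = qip D (qapp D (\<lambda>i j. E $$ (i,j)) (\<lambda>i. if i < d then w i else 0)) (\<lambda>i. if i < d then w i else 0)"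
    by (rule cprod_eq[OF E v le_refl]) (simp add: v_def)
  also have "\<dots> = qip d (qapp d (\<lambda>i j. E $$ (i,j)) w) w" by (rule trunc_ip[OF dD])
  finally show ?thesis .
qed

lemma herm_bridge:
  assumes h: "hermitian_mat E" and E: "E \<in> carrier_mat D D" and dD: "d \<le> D"
  shows "qherm d (\<lambda>i j. E $$ (i,j))"
  unfolding qherm_def
proof (intro allI impI)
  fix i j assume ij: "i < d" "j < d"
  have "i < dim_row E" "j < dim_col E" using ij dD E by auto
  then show "E $$ (i, j) = cnj (E $$ (j, i))" using h unfolding hermitian_mat_def by blast
qed

lemma povm_sum:
  assumes eq: "E0 + E1 = 1\<^sub>m D" and E1: "E1 \<in> carrier_mat D D" and ij: "i < d" "j < d" and dD: "d \<le> D"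
  shows "E0 $$ (i,j) + E1 $$ (i,j) = (if i = j then 1 else 0)"
proof -
  have "i < D" "j < D" using ij dD by auto
  moreover have "(E0 + E1) $$ (i,j) = E0 $$ (i,j) + E1 $$ (i,j)" using E1 \<open>i < D\<close> \<open>j < D\<close> by simp
  ultimately show ?thesis using eq by simp
qed

lemma qip_add_left: "qip d (\<lambda>i. u i + v i) z = qip d u z + qip d v z"
  unfolding qip_def by (simp add: algebra_simps sum.distrib)

lemma qip_trunc_left: "qip d (\<lambda>i. if i < d then u i else 0) z = qip d u z"
  unfolding qip_def by (intro sum.cong) auto

lemma Sm_re:
  "Re (qip d (qapp d (qSm X A L) w) w) = (\<Sum>x\<in>X. qsg (L x) * Re (qip d (qapp d (A x) w) w))"
  unfolding app_Sm ip_sum_left ip_scale_left by (simp add: Re_sum)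

lemma sqrt_le_cuberoot:
  fixes r :: real
  assumes "0 \<le> r" "r \<le> 1"
  shows "sqrt r \<le> r powr (1/3)"
proof (cases "r = 0")
  case True then show ?thesis by simp
next
  case False
  define y where "y = r powr (1/3)"
  have y0: "0 < y" using False assms unfolding y_def by simp
  have y3: "y ^ 3 = r"
  proof -
    have "y ^ 3 = y powr (real 3)" using y0 by (simp add: powr_realpow)
    also have "\<dots> = r" unfolding y_def powr_powr using False assms by simp
    finally show ?thesis .
  qed
  have y1: "y \<le> 1"
  proof (rule ccontr)
    assume "\<not> y \<le> 1"
    hence "1 < y ^ 3" by (simp add: one_less_power)
    thus False using y3 assms by simp
  qed
  have "r \<le> y ^ 2"
  proof -
    have "y ^ 3 = y * y ^ 2" by (simp add: power_numeral_reduce)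
    also have "\<dots> \<le> 1 * y ^ 2" using y1 by (intro mult_right_mono) auto
    finally show ?thesis using y3 by simp
  qed
  hence "sqrt r \<le> sqrt (y ^ 2)" by (rule real_sqrt_le_mono)
  also have "\<dots> = y" using y0 by simp
  finally show ?thesis unfolding y_def .
qed

lemma cuberoot_ge:
  fixes r :: real
  assumes "1/2 \<le> r"
  shows "1/10 \<le> r powr (1/3)"
proof (rule ccontr)
  define y where "y = r powr (1/3)"
  assume "\<not> 1/10 \<le> r powr (1/3)"
  hence ylt: "y < 1/10" unfolding y_def by simp
  have y0: "0 < y" using assms unfolding y_def by simp
  have "y ^ 3 = y powr (real 3)" using y0 by (simp add: powr_realpow)
  also have "\<dots> = r" unfolding y_def powr_powr using assms by simp
  finally have y3: "y ^ 3 = r" .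
  have "y ^ 3 < (1/10) ^ 3" using ylt y0 by (intro power_strict_mono) auto
  thus False using y3 assms by (simp add: power3_eq_cube)
qed

lemma sum_sg_zero:
  assumes fin: "finite X" and x: "x \<in> X"
  shows "(\<Sum>L\<in>X \<rightarrow>\<^sub>E (UNIV::bool set). qsg (L x)) = 0"
proof -
  have "(\<Sum>L\<in>X \<rightarrow>\<^sub>E (UNIV::bool set). qsg (L x))
     = (\<Sum>L\<in>X \<rightarrow>\<^sub>E (UNIV::bool set). \<Prod>y\<in>X. (if y = x then qsg (L y) else 1))"
    using fin x by (intro sum.cong refl) (simp add: prod.delta')
  also have "\<dots> = (\<Prod>y\<in>X. \<Sum>b\<in>(UNIV::bool set). (if y = x then qsg b else 1))"
    by (rule prod_sum_PiE[symmetric]) (use fin in auto)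
  also have "\<dots> = 0"
    using fin x by (intro prod_zero bexI[of _ x]) (auto simp: UNIV_bool qsg_def)
  finally show ?thesis .
qed

theorem mainTheorem10:
  fixes p :: "nat \<Rightarrow> nat"
  shows "\<exists>C::real. \<forall>n::nat. \<forall>(psi :: (bool list \<Rightarrow> bool) \<Rightarrow> complex vec)
           (M :: bool list \<Rightarrow> bool \<Rightarrow> complex mat).
           (\<forall>L \<in> boolfuns n. pure_state (p n) (psi L)) \<longrightarrow>
           (\<forall>x \<in> bitstrings n. binary_povm (qdim (p n)) (M x False) (M x True)) \<longrightarrow>
           success_prob n psi M \<le> 1/2 + C * (real (p n) / 2 ^ n) powr (1/3)"
proof (intro exI[of _ 5] allI impI)
  fix n psi M
  assume hpsi: "\<forall>L \<in> boolfuns n. pure_state (p n) (psi L)"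
    and hM: "\<forall>x \<in> bitstrings n. binary_povm (qdim (p n)) (M x False) (M x True)"
  define P where "P = p n"
  define X where "X = bitstrings n"
  define F where "F = boolfuns n"
  define d where "d = qdim P"
  define D where "D = d"
  define N where "N = card X"
  have Xeq: "X = {xs. set xs \<subseteq> (UNIV::bool set) \<and> length xs = n}" unfolding X_def bitstrings_def by simp
  have finX: "finite X" unfolding Xeq by (rule finite_lists_length_eq) simp
  have cardX: "N = 2 ^ n" unfolding N_def Xeq using card_lists_length_eq[of "UNIV::bool set" n] by simp
  have FX: "F = X \<rightarrow>\<^sub>E (UNIV::bool set)" by (simp add: F_def X_def boolfuns_def)
  have finF: "finite F" unfolding FX using finX by (simp add: finite_PiE)
  have cardF: "card F = 2 ^ N" unfolding FX N_def using finX by (simp add: card_PiE)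
  have dpow: "d = 2 ^ P" unfolding d_def qdim_def ..
  have dD: "d \<le> D" unfolding D_def by simp
  define psf where "psf = (\<lambda>L i. if i < d then psi L $ i else 0)"
  define B where "B = (\<lambda>x b i j. M x b $$ (i,j))"
  define A where "A = (\<lambda>x i j. B x True i j - B x False i j)"
  have povm: "binary_povm D (M x False) (M x True)" if "x \<in> X" for x
    using hM that unfolding X_def D_def d_def P_def by auto
  have Mpsd: "psd_mat D (M x b)" if "x \<in> X" for x b
    using povm[OF that] unfolding binary_povm_def by (cases b) auto
  have Mcar: "M x b \<in> carrier_mat D D" if "x \<in> X" for x b
    using Mpsd[OF that] unfolding psd_mat_def by auto
  have Msum: "M x False + M x True = 1\<^sub>m D" if "x \<in> X" for x
    using povm[OF that] unfolding binary_povm_def by auto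
  have pcar: "psi L \<in> carrier_vec d" and pn: "(psi L) \<bullet>c (psi L) = 1" if "L \<in> F" for L
    using hpsi that unfolding F_def pure_state_def d_def P_def by auto
  have op: "outcome_prob (M x b) (psi L) = Re (qip d (qapp d (B x b) (psf L)) (psf L))"
    if "x \<in> X" "L \<in> F" for x b L
    unfolding outcome_prob_def B_def psf_def
    by (subst cprod_eq[OF Mcar[OF that(1)] pcar[OF that(2)] dD]) auto
  have psf1: "qnrm d (psf L) = 1" and psf0: "\<forall>j\<ge>d. psf L j = 0" if "L \<in> F" for L
  proof -
    have "complex_of_real (qnrm d (psf L)) = qip d (psf L) (psf L)" by (simp add: ip_self)
    also have "\<dots> = (\<Sum>i\<in>{0..<d}. psi L $ i * conjugate (psi L) $ i)"
      unfolding qip_def psf_def using pcar[OF that] by (intro sum.cong) (auto simp: atLeast0LessThan)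
    also have "\<dots> = 1" using pn[OF that] pcar[OF that] unfolding scalar_prod_def by simp
    finally show "qnrm d (psf L) = 1" by (metis of_real_eq_1_iff)
    show "\<forall>j\<ge>d. psf L j = 0" unfolding psf_def by simp
  qed
  have Bsum: "qapp d (B x False) w i + qapp d (B x True) w i = (if i < d then w i else 0)"
    if "x \<in> X" for x w i
  proof (cases "i < d")
    case True
    have "qapp d (B x False) w i + qapp d (B x True) w i = (\<Sum>j<d. (B x False i j + B x True i j) * w j)"
      using True by (simp add: qapp_def sum.distrib algebra_simps)
    also have "\<dots> = (\<Sum>j<d. (if i = j then 1 else 0) * w j)"
      using True unfolding B_def
      by (intro sum.cong refl) (simp add: povm_sum[OF Msum[OF that] Mcar[OF that] _ _ dD])
    also have "\<dots> = (\<Sum>j<d. if i = j then w j else 0)" by (intro sum.cong refl) simp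
    also have "\<dots> = w i" using True by simp
    finally show ?thesis using True by simp
  qed (simp add: qapp_def)
  have Aapp: "qapp d (A x) w = (\<lambda>i. qapp d (B x True) w i - qapp d (B x False) w i)" for x w
    unfolding A_def qapp_def by (auto simp: fun_eq_iff algebra_simps sum_subtractf)
  define ob where "ob = (\<lambda>x b L. Re (qip d (qapp d (B x b) (psf L)) (psf L)))"
  have ob1: "ob x False L + ob x True L = 1" if "x \<in> X" "L \<in> F" for x L
  proof -
    have "qip d (qapp d (B x False) (psf L)) (psf L) + qip d (qapp d (B x True) (psf L)) (psf L)
        = qip d (\<lambda>i. if i < d then psf L i else 0) (psf L)"
      unfolding qip_add_left[symmetric] Bsum[OF that(1)] ..
    also have "\<dots> = qip d (psf L) (psf L)" by (rule qip_trunc_left)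
    also have "\<dots> = 1" using psf1[OF that(2)] by (simp add: ip_self)
    finally show ?thesis unfolding ob_def by (metis one_complex.simps(1) plus_complex.simps(1))
  qed
  have obA: "Re (qip d (qapp d (A x) (psf L)) (psf L)) = ob x True L - ob x False L" for x L
    unfolding Aapp ip_diff_left ob_def by simp
  have opform: "outcome_prob (M x (L x)) (psi L) = 1/2 + qsg (L x) / 2 * Re (qip d (qapp d (A x) (psf L)) (psf L))"
    if "x \<in> X" "L \<in> F" for x L
    using op[OF that, of "L x"] ob1[OF that] unfolding obA ob_def qsg_def
    by (cases "L x") (simp_all add: field_simps)
  have ob0: "0 \<le> ob x b L" if "x \<in> X" for x b L
    unfolding ob_def B_def by (rule psd_bridge[OF Mpsd[OF that] dD])
  have ople1: "outcome_prob (M x b) (psi L) \<le> 1" if "x \<in> X" "L \<in> F" for x b L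
    using op[OF that, of b] ob1[OF that] ob0[OF that(1), of False L] ob0[OF that(1), of True L]
    unfolding ob_def by (cases b) auto
  define Lam where "Lam = (\<Sum>L\<in>F. Re (qip d (qapp d (qSm X A L) (psf L)) (psf L)))"
  have sumform: "(\<Sum>x\<in>X. \<Sum>L\<in>F. outcome_prob (M x (L x)) (psi L)) = real N * real (card F) / 2 + Lam / 2"
  proof -
    have "(\<Sum>x\<in>X. \<Sum>L\<in>F. outcome_prob (M x (L x)) (psi L))
       = (\<Sum>x\<in>X. \<Sum>L\<in>F. 1/2 + qsg (L x) / 2 * Re (qip d (qapp d (A x) (psf L)) (psf L)))"
      by (intro sum.cong refl opform)
    also have "\<dots> = (\<Sum>L\<in>F. \<Sum>x\<in>X. 1/2 + qsg (L x) / 2 * Re (qip d (qapp d (A x) (psf L)) (psf L)))"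
      by (rule sum.swap)
    also have "\<dots> = (\<Sum>L\<in>F. real N / 2 + Re (qip d (qapp d (qSm X A L) (psf L)) (psf L)) / 2)"
      unfolding Sm_re N_def by (intro sum.cong refl) (simp add: sum.distrib sum_divide_distrib)
    also have "\<dots> = real N * real (card F) / 2 + Lam / 2"
      unfolding Lam_def by (simp add: sum.distrib sum_divide_distrib)
    finally show ?thesis .
  qed
  have succ: "success_prob n psi M = 1/2 + Lam / (2 * real N * real (card F))"
  proof -
    have "success_prob n psi M = (\<Sum>x\<in>X. \<Sum>L\<in>F. outcome_prob (M x (L x)) (psi L)) / (real N * real (card F))"
      unfolding success_prob_def X_def F_def N_def ..
    also have "\<dots> = (real N * real (card F) / 2 + Lam / 2) / (real N * real (card F))"
      unfolding sumform ..
    also have "\<dots> = 1/2 + Lam / (2 * real N * real (card F))"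
      using cardX cardF by (simp add: field_simps)
    finally show ?thesis .
  qed
  have Npos: "0 < real N" using cardX by simp
  have Fpos: "0 < real (card F)" using cardF by simp
  show "success_prob n psi M \<le> 1/2 + 5 * (real (p n) / 2 ^ n) powr (1/3)"
  proof (cases "P = 0")
    case True
    have d1: "d = 1" using True dpow by simp
    have "Lam = (\<Sum>L\<in>F. \<Sum>x\<in>X. qsg (L x) * Re (A x 0 0))"
    proof -
      have "Re (qip d (qapp d (A x) (psf L)) (psf L)) = Re (A x 0 0)" if "L \<in> F" for x L
      proof -
        have n1: "(cmod (psf L 0))^2 = 1" using psf1[OF that] d1 unfolding qnrm_def by simp
        have "qip d (qapp d (A x) (psf L)) (psf L) = A x 0 0 * (psf L 0 * cnj (psf L 0))"
          using d1 by (simp add: qip_def qapp_def mult.assoc)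
        also have "\<dots> = A x 0 0" using n1 by (simp flip: complex_norm_square)
        finally show ?thesis by simp
      qed
      thus ?thesis unfolding Lam_def Sm_re by (intro sum.cong refl) simp
    qed
    also have "\<dots> = (\<Sum>x\<in>X. Re (A x 0 0) * (\<Sum>L\<in>F. qsg (L x)))"
      by (subst sum.swap) (simp add: sum_distrib_left mult.commute)
    also have "\<dots> = 0" unfolding FX using sum_sg_zero[OF finX] by simp
    finally have "Lam = 0" .
    then show ?thesis using succ True unfolding P_def by simp
  next
    case False
    show ?thesis
    proof (cases "2 * P \<le> N")
      case True
      have "Lam \<le> 2 ^ card X * (10 * sqrt (real P * real (card X)))"
        unfolding Lam_def FX
      proof (rule bias_bound[OF finX _ _ dpow])
        show "1 \<le> P" using False by simp
        show "2 * P \<le> card X" using True N_def by simp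
        show "\<forall>x\<in>X. qherm d (A x)"
        proof
          fix x assume x: "x \<in> X"
          have h0: "qherm d (B x False)" and h1: "qherm d (B x True)"
            unfolding B_def using Mpsd[OF x] Mcar[OF x] dD
            by (auto intro!: herm_bridge simp: psd_mat_def)
          show "qherm d (A x)" unfolding qherm_def
          proof (intro allI impI)
            fix i j assume "i < d" "j < d"
            then have "B x True i j = cnj (B x True j i)" "B x False i j = cnj (B x False j i)"
              using h0 h1 unfolding qherm_def by blast+
            then show "A x i j = cnj (A x j i)" unfolding A_def by simp
          qed
        qed
        show "\<forall>x\<in>X. \<forall>v. qnrm d (qapp d (A x) v) \<le> qnrm d v"
        proof (intro ballI allI)
          fix x v assume x: "x \<in> X"
          have hB: "qherm d (B x False)"
            unfolding B_def using Mpsd[OF x] Mcar[OF x] dD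
            by (auto intro!: herm_bridge simp: psd_mat_def)
          have p0: "0 \<le> Re (qip d (qapp d (B x b) w) w)" for b w
            unfolding B_def by (rule psd_bridge[OF Mpsd[OF x] dD])
          have p1: "Re (qip d (qapp d (B x False) w) w) \<le> qnrm d w" for w
          proof -
            have "qip d (qapp d (B x False) w) w + qip d (qapp d (B x True) w) w = qip d w w"
              unfolding qip_add_left[symmetric] Bsum[OF x] qip_trunc_left ..
            hence "Re (qip d (qapp d (B x False) w) w) + Re (qip d (qapp d (B x True) w) w) = qnrm d w"
              by (metis ip_self Re_complex_of_real plus_complex.simps(1))
            thus ?thesis using p0[of True w] by linarith
          qed
          have "qnrm d (qapp d (A x) v) = qnrm d (\<lambda>i. v i - 2 * qapp d (B x False) v i)"
            unfolding qnrm_def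
          proof (intro sum.cong refl)
            fix i assume i: "i \<in> {..<d}"
            have "qapp d (B x True) v i = (if i < d then v i else 0) - qapp d (B x False) v i"
              using Bsum[OF x, of v i] by (simp add: algebra_simps)
            then show "(cmod (qapp d (A x) v i))^2 = (cmod (v i - 2 * qapp d (B x False) v i))^2"
              unfolding Aapp using i by simp
          qed
          also have "\<dots> \<le> qnrm d v" by (rule contr[OF hB p0 p1])
          finally show "qnrm d (qapp d (A x) v) \<le> qnrm d v" .
        qed
        show "\<forall>L\<in>X \<rightarrow>\<^sub>E UNIV. qnrm d (psf L) = 1 \<and> (\<forall>j\<ge>d. psf L j = 0)"
          using psf1 psf0 unfolding FX by blast
      qed
      hence LamB: "Lam \<le> real (card F) * (10 * sqrt (real P * real N))"
        using cardF N_def by simp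
      have rle: "real P / real N \<le> 1" using True Npos by (simp add: divide_le_eq)
      have "success_prob n psi M \<le> 1/2 + real (card F) * (10 * sqrt (real P * real N)) / (2 * real N * real (card F))"
      proof -
        have h: "Lam / (2 * real N * real (card F)) \<le> real (card F) * (10 * sqrt (real P * real N)) / (2 * real N * real (card F))"
          by (rule divide_right_mono[OF LamB]) (use Npos Fpos in simp)
        show ?thesis unfolding succ by (rule add_left_mono[OF h])
      qed
      also have "real (card F) * (10 * sqrt (real P * real N)) / (2 * real N * real (card F))
          = 5 * sqrt (real P / real N)"
      proof -
        have "sqrt (real P * real N) / real N = sqrt (real P / real N)"
          using Npos by (simp add: real_sqrt_divide real_sqrt_mult field_simps)
        thus ?thesis using Fpos Npos by (simp add: field_simps)
      qed
      also have "\<dots> \<le> 5 * (real P / real N) powr (1/3)"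
        using sqrt_le_cuberoot[OF _ rle] Npos by simp
      finally show ?thesis unfolding P_def cardX by simp
    next
      case False
      have "success_prob n psi M \<le> 1"
      proof -
        have "(\<Sum>x\<in>X. \<Sum>L\<in>F. outcome_prob (M x (L x)) (psi L)) \<le> (\<Sum>x\<in>X. \<Sum>L\<in>F. 1)"
          by (intro sum_mono ople1)
        also have "\<dots> = real N * real (card F)" unfolding N_def by simp
        finally have "real N * real (card F) / 2 + Lam / 2 \<le> real N * real (card F)" unfolding sumform .
        hence LN: "Lam \<le> real N * real (card F)" by simp
        have "Lam / (2 * real N * real (card F)) \<le> (real N * real (card F)) / (2 * real N * real (card F))"
          by (rule divide_right_mono[OF LN]) (use Npos Fpos in simp)
        also have "\<dots> = 1/2" using Npos Fpos by simp
        finally show ?thesis unfolding succ by simp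
      qed
      also have "1 \<le> 1/2 + 5 * (real P / real N) powr (1/3)"
      proof -
        have "1/2 \<le> real P / real N" using False Npos by (simp add: le_divide_eq)
        from cuberoot_ge[OF this] show ?thesis by simp
      qed
      finally show ?thesis unfolding P_def cardX by simp
    qed
  qed
qed

end
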